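(* Let $b\ge2$ be an integer. (1) For any subset $S$ of $\mathbb{Z}$ with $|S|\ge n$ (allowing $n=+\infty$) and any $S$-test sequence $\mathbf{s}=(s_i)_{i=0}^n$, one has for $1\le m<n$ $$\sum_{k=1}^m\alpha_k(S,b,\mathbf{s})\ \ge\ \sum_{k=1}^m\alpha_k(S,b).$$ (2) Given a fixed $N\ge1$, if the $S$-test sequence $(s_i)_{i=0}^N$ is the initial part of a $b$-ordering of $S$, then equality holds in the inequality of (1) for $1\le m\le N$.
   Context: For an integer $b\ge2$ and $a\in\mathbb{Z}$, $\operatorname{ord}_b(a)$ is the largest $k\in\mathbb{N}$ with $b^k\mid a$, and $\operatorname{ord}_b(0)=+\infty$. For nonempty $S\subseteq\mathbb{Z}$, an $S$-test sequence is any (finite or infinite) sequence $\mathbf{s}=(s_i)$ of elements of $S$, repetitions allowed; its $b$-exponent values are $\alpha_k(S,b,\mathbf{s}):=\sum_{j=0}^{k-1}\operatorname{ord}_b(s_k-s_j)$. A $b$-ordering of $S$ is an infinite $S$-test sequence $(a_i)_{i\ge0}$ such that for every $i\ge1$, $a_i$ attains $\min_{a'\in S}\sum_{j=0}^{i-1}\operatorname{ord}_b(a'-a_j)$. The $b$-exponent sequence of $S$ is $\alpha_k(S,b):=\alpha_k(S,b,\mathbf{a})$ for any $b$-ordering $\mathbf{a}$ of $S$; this does not depend on the choice of $b$-ordering. *)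

theory Defs
  imports Main "HOL-Library.Extended_Nat"
begin

definition ordb :: "int \<Rightarrow> int \<Rightarrow> enat" where
  "ordb b a = (if a = 0 then \<infinity> else enat (GREATEST k. b ^ k dvd a))"

definition bsum :: "int \<Rightarrow> (nat \<Rightarrow> int) \<Rightarrow> nat \<Rightarrow> int \<Rightarrow> enat" where
  "bsum b s i x = (\<Sum>j<i. ordb b (x - s j))"

definition alpha_seq :: "int \<Rightarrow> (nat \<Rightarrow> int) \<Rightarrow> nat \<Rightarrow> enat" where
  "alpha_seq b s k = bsum b s k (s k)"

definition b_ordering :: "int set \<Rightarrow> int \<Rightarrow> (nat \<Rightarrow> int) \<Rightarrow> bool" where
  "b_ordering S b a \<longleftrightarrow> (\<forall>i. a i \<in> S) \<and>
     (\<forall>i\<ge>1. \<forall>x\<in>S. bsum b a i (a i) \<le> bsum b a i x)"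

definition alpha_set :: "int set \<Rightarrow> int \<Rightarrow> nat \<Rightarrow> enat" where
  "alpha_set S b k = alpha_seq b (SOME a. b_ordering S b a) k"

definition ecard :: "'a set \<Rightarrow> enat" where
  "ecard S = (if finite S then enat (card S) else \<infinity>)"

end

theory Submission
  imports Defs
begin

lemma card_fib:
  assumes "finite A" "g ` A \<subseteq> B" "finite B"
  shows "card A = (\<Sum>r\<in>B. card {x\<in>A. g x = r})"
proof -
  have "A = (\<Union>r\<in>B. {x\<in>A. g x = r})" using assms(2) by auto
  then have "card A = card (\<Union>r\<in>B. {x\<in>A. g x = r})" by simp
  also have "\<dots> = (\<Sum>r\<in>B. card {x\<in>A. g x = r})"
    by (rule card_UN_disjoint) (use assms in auto)
  finally show ?thesis .
qed

lemma sum_enat_fin: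
  "finite A \<Longrightarrow> (\<Sum>x\<in>A. enat (f x)) = enat (\<Sum>x\<in>A. f x)"
  by (induction A rule: finite_induct) (auto simp: zero_enat_def)

lemma sum_enat_inf:
  fixes f :: "'a \<Rightarrow> enat"
  assumes "finite A" "x \<in> A" "f x = \<infinity>"
  shows "sum f A = \<infinity>"
proof -
  have "f x \<le> sum f A" by (rule member_le_sum) (use assms in auto)
  then show ?thesis using assms by auto
qed

lemma ordb_inf: "ordb b a = \<infinity> \<longleftrightarrow> a = 0"
  by (simp add: ordb_def)

lemma ordb_neg: "ordb b (-a) = ordb b a"
  by (simp add: ordb_def)

lemma pow_bound:
  fixes b a :: int
  assumes "b \<ge> 2" "a \<noteq> 0" "b ^ k dvd a"
  shows "k \<le> nat \<bar>a\<bar>"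
proof -
  have "\<bar>b ^ k\<bar> \<le> \<bar>a\<bar>" using dvd_imp_le_int assms by blast
  moreover have "(2::int) ^ k \<le> b ^ k" using assms(1) by (simp add: power_mono)
  moreover have "int k < 2 ^ k" by (metis less_exp of_nat_less_iff of_nat_numeral of_nat_power)
  ultimately have "int k < \<bar>a\<bar>" using assms(1) by (smt (verit) zero_le_power)
  then show ?thesis by linarith
qed

lemma ordb_ge:
  fixes b a :: int
  assumes "b \<ge> 2"
  shows "enat e \<le> ordb b a \<longleftrightarrow> b ^ e dvd a"
proof (cases "a = 0")
  case True then show ?thesis by (simp add: ordb_def)
next
  case False
  let ?G = "GREATEST k. b ^ k dvd a"
  have bd: "\<And>y. b ^ y dvd a \<Longrightarrow> y \<le> nat \<bar>a\<bar>" using pow_bound assms False by blast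
  have G: "b ^ ?G dvd a" by (rule GreatestI_nat[of _ 0]) (use bd in auto)
  show ?thesis
  proof
    assume "enat e \<le> ordb b a"
    then have "e \<le> ?G" using False by (simp add: ordb_def)
    then show "b ^ e dvd a" using G by (meson dvd_trans le_imp_power_dvd)
  next
    assume "b ^ e dvd a"
    then have "e \<le> ?G" using bd by (intro Greatest_le_nat) auto
    then show "enat e \<le> ordb b a" using False by (simp add: ordb_def)
  qed
qed

lemma mod_up:
  fixes b z :: int
  shows "z mod b ^ Suc e mod b ^ e = z mod b ^ e"
  by (simp add: mod_mod_cancel)

lemma exch_aux:
  fixes b :: int and X Y :: "int set"
  assumes b: "b \<ge> 2" and fin: "finite X" "finite Y"
    and sep: "\<And>u v. u \<in> X \<union> Y \<Longrightarrow> v \<in> X \<union> Y \<Longrightarrow> b ^ M dvd (u - v) \<Longrightarrow> u = v"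
  shows "M - e0 = d \<Longrightarrow> card {z\<in>Y. z mod b^e0 = r} < card {x\<in>X. x mod b^e0 = r} \<Longrightarrow>
    \<exists>y\<in>X. y mod b^e0 = r \<and> (\<forall>e\<ge>e0. card {z\<in>Y. z mod b^e = y mod b^e} < card {x\<in>X. x mod b^e = y mod b^e})"
proof (induction d arbitrary: e0 r)
  case 0
  then have "{x\<in>X. x mod b^e0 = r} \<noteq> {}" by (metis card.empty not_less0)
  then obtain y where y: "y \<in> X" "y mod b^e0 = r" by auto
  have cls: "z = y" if "e \<ge> e0" "z \<in> X \<union> Y" "z mod b^e = y mod b^e" for e z
  proof -
    have "b ^ e dvd (z - y)" using that(3) by (simp add: mod_eq_dvd_iff)
    moreover have "M \<le> e" using 0 that(1) by simp
    ultimately have "b ^ M dvd (z - y)" by (meson dvd_trans le_imp_power_dvd)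
    then show ?thesis using sep that(2) y(1) by blast
  qed
  have sub: "{x\<in>X. x mod b^e0 = r} \<subseteq> {y}" using cls y by auto
  have "y \<notin> Y"
  proof
    assume "y \<in> Y"
    then have "card {z\<in>Y. z mod b^e0 = r} \<ge> 1" using y fin
      by (metis (mono_tags, lifting) One_nat_def Suc_leI card_gt_0_iff empty_iff finite_subset mem_Collect_eq subsetI)
    moreover have "card {x\<in>X. x mod b^e0 = r} \<le> 1" using card_mono[OF _ sub] by simp
    ultimately show False using 0 by simp
  qed
  have "\<forall>e\<ge>e0. card {z\<in>Y. z mod b^e = y mod b^e} < card {x\<in>X. x mod b^e = y mod b^e}"
  proof (intro allI impI)
    fix e assume e: "e \<ge> e0"
    have "{z\<in>Y. z mod b^e = y mod b^e} = {}" using cls[OF e] \<open>y \<notin> Y\<close> by auto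
    moreover have "y \<in> {x\<in>X. x mod b^e = y mod b^e}" using y by auto
    then have "card {x\<in>X. x mod b^e = y mod b^e} > 0" using fin
      by (metis (no_types, lifting) card_gt_0_iff empty_iff finite_subset mem_Collect_eq subsetI)
    ultimately show "card {z\<in>Y. z mod b^e = y mod b^e} < card {x\<in>X. x mod b^e = y mod b^e}" by (metis card.empty)
  qed
  then show ?case using y by blast
next
  case (Suc d)
  define g where "g = (\<lambda>x::int. x mod b ^ Suc e0)"
  define Xr where "Xr = {x\<in>X. x mod b^e0 = r}"
  define Yr where "Yr = {z\<in>Y. z mod b^e0 = r}"
  have gm: "g x mod b^e0 = x mod b^e0" for x unfolding g_def by (rule mod_up)
  have "\<exists>x0\<in>Xr. card {z\<in>Y. g z = g x0} < card {x\<in>X. g x = g x0}"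
  proof (rule ccontr)
    assume na: "\<not> ?thesis"
    define B where "B = g ` Xr \<union> g ` Yr"
    have fXr: "finite Xr" "finite Yr" using fin unfolding Xr_def Yr_def by auto
    have fB: "finite B" unfolding B_def using fXr by auto
    have "card Xr = (\<Sum>\<rho>\<in>B. card {x\<in>Xr. g x = \<rho>})"
      by (rule card_fib) (use fXr fB B_def in auto)
    also have "\<dots> \<le> (\<Sum>\<rho>\<in>B. card {x\<in>Yr. g x = \<rho>})"
    proof (rule sum_mono)
      fix \<rho> assume "\<rho> \<in> B"
      show "card {x\<in>Xr. g x = \<rho>} \<le> card {x\<in>Yr. g x = \<rho>}"
      proof (cases "\<exists>x0\<in>Xr. g x0 = \<rho>")
        case True
        then obtain x0 where x0: "x0 \<in> Xr" "g x0 = \<rho>" by blast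
        have "{x\<in>Xr. g x = \<rho>} = {x\<in>X. g x = g x0}"
          using x0 gm unfolding Xr_def by (auto, metis)
        moreover have "{x\<in>Yr. g x = \<rho>} = {z\<in>Y. g z = g x0}"
          using x0 gm unfolding Xr_def Yr_def by (auto, metis)
        ultimately show ?thesis using na x0 by auto
      next
        case False
        then have "{x\<in>Xr. g x = \<rho>} = {}" by auto
        then show ?thesis by (metis card.empty le0)
      qed
    qed
    also have "\<dots> = card Yr"
      by (rule card_fib[symmetric]) (use fXr fB B_def in auto)
    finally show False using Suc.prems(2) unfolding Xr_def Yr_def by simp
  qed
  then obtain x0 where x0: "x0 \<in> Xr" "card {z\<in>Y. g z = g x0} < card {x\<in>X. g x = g x0}" by blast
  have "M - Suc e0 = d" using Suc.prems(1) by simp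
  from Suc.IH[OF this, of "g x0"] x0(2) obtain y where
    y: "y \<in> X" "y mod b ^ Suc e0 = g x0"
       "\<forall>e\<ge>Suc e0. card {z\<in>Y. z mod b^e = y mod b^e} < card {x\<in>X. x mod b^e = y mod b^e}"
    unfolding g_def by blast
  have yr: "y mod b ^ e0 = r"
    using y(2) gm[of y] gm[of x0] x0(1) unfolding Xr_def g_def by auto
  show ?case
  proof (intro bexI conjI allI impI)
    fix e assume "e0 \<le> e"
    then have "e = e0 \<or> Suc e0 \<le> e" by auto
    then show "card {z\<in>Y. z mod b^e = y mod b^e} < card {x\<in>X. x mod b^e = y mod b^e}"
      using y(3) yr Suc.prems(2) by auto
  qed (use y yr in auto)
qed

lemma sep_exists:
  fixes b :: int and U :: "int set"
  assumes b: "b \<ge> 2" and fin: "finite U"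
  shows "\<exists>M. \<forall>u\<in>U. \<forall>v\<in>U. b ^ M dvd (u - v) \<longrightarrow> u = v"
proof -
  define K where "K = (\<Sum>u\<in>U. \<bar>u\<bar>)"
  have Kb: "\<bar>u\<bar> \<le> K" if "u \<in> U" for u
    unfolding K_def using fin that by (intro member_le_sum) auto
  define M where "M = nat (2 * K)"
  have "int M < 2 ^ M" by (metis less_exp of_nat_less_iff of_nat_numeral of_nat_power)
  moreover have "(2::int) ^ M \<le> b ^ M" using b by (simp add: power_mono)
  ultimately have bM: "2 * K < b ^ M" unfolding M_def by linarith
  show ?thesis
  proof (intro exI ballI impI)
    fix u v assume uv: "u \<in> U" "v \<in> U" "b ^ M dvd (u - v)"
    show "u = v"
    proof (rule ccontr)
      assume "u \<noteq> v"
      then have "\<bar>b ^ M\<bar> \<le> \<bar>u - v\<bar>" using dvd_imp_le_int uv(3) by simp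
      moreover have "\<bar>u - v\<bar> \<le> 2 * K" using Kb[OF uv(1)] Kb[OF uv(2)] by linarith
      ultimately show False using bM by linarith
    qed
  qed
qed

lemma exch:
  fixes b :: int and X Y :: "int set"
  assumes b: "b \<ge> 2" and fin: "finite X" "finite Y" and cXY: "card Y < card X"
  shows "\<exists>y\<in>X. y \<notin> Y \<and> (\<forall>e. card {z\<in>Y. b^e dvd (y - z)} < card {x\<in>X. b^e dvd (y - x)})"
proof -
  obtain M where sepM: "\<forall>u\<in>X \<union> Y. \<forall>v\<in>X \<union> Y. b ^ M dvd (u - v) \<longrightarrow> u = v"
    using sep_exists[OF b, of "X \<union> Y"] fin by auto
  have eqs: "{z\<in>Z. z mod b^e = y mod b^e} = {z\<in>Z. b^e dvd (y - z)}" for Z e y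
  proof -
    have "z mod b^e = y mod b^e \<longleftrightarrow> b^e dvd (y - z)" for z
      using mod_eq_dvd_iff[of y "b^e" z] by auto
    then show ?thesis by auto
  qed
  have "card {z\<in>Y. z mod b^0 = 0} < card {x\<in>X. x mod b^0 = 0}" using cXY by simp
  from exch_aux[OF b fin _ refl this, of M] sepM obtain y where
    y: "y \<in> X" "\<forall>e. card {z\<in>Y. z mod b^e = y mod b^e} < card {x\<in>X. x mod b^e = y mod b^e}"
    by auto
  have y2: "\<forall>e. card {z\<in>Y. b^e dvd (y - z)} < card {x\<in>X. b^e dvd (y - x)}"
    using y(2) unfolding eqs .
  have "y \<notin> Y"
  proof
    assume yY: "y \<in> Y"
    have "{x\<in>X. b^M dvd (y - x)} \<subseteq> {y}" using sepM y(1) by auto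
    then have "card {x\<in>X. b^M dvd (y - x)} \<le> 1" using card_mono[of "{y}"] by fastforce
    moreover have "y \<in> {z\<in>Y. b^M dvd (y - z)}" using yY by simp
    then have "card {z\<in>Y. b^M dvd (y - z)} \<ge> 1" using fin
      by (metis (no_types, lifting) One_nat_def Suc_leI card_gt_0_iff empty_iff finite_subset mem_Collect_eq subsetI)
    ultimately show False using y2[rule_format, of M] by linarith
  qed
  then show ?thesis using y(1) y2 by blast
qed

lemma card_filter_sum: "finite A \<Longrightarrow> card {x\<in>A. P x} = (\<Sum>x\<in>A. if P x then 1 else 0)"
  by (simp add: sum.If_cases Int_def)

lemma layer_nat:
  fixes h :: "'a \<Rightarrow> nat"
  assumes "finite U" "\<forall>u\<in>U. h u \<le> M"
  shows "sum h U = (\<Sum>e\<in>{1..M}. card {u\<in>U. e \<le> h u})"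
proof -
  have "h u = (\<Sum>e\<in>{1..M}. if e \<le> h u then 1 else 0)" if "u \<in> U" for u
  proof -
    have "{e\<in>{1..M}. e \<le> h u} = {1..h u}" using assms(2) that by auto
    then have "h u = card {e\<in>{1..M}. e \<le> h u}" by simp
    also have "\<dots> = (\<Sum>e\<in>{1..M}. if e \<le> h u then 1 else 0)" by (rule card_filter_sum) simp
    finally show ?thesis .
  qed
  then have "sum h U = (\<Sum>u\<in>U. \<Sum>e\<in>{1..M}. if e \<le> h u then 1 else 0)" by (rule sum.cong[OF refl])
  also have "\<dots> = (\<Sum>e\<in>{1..M}. \<Sum>u\<in>U. if e \<le> h u then 1 else 0)" by (rule sum.swap)
  also have "\<dots> = (\<Sum>e\<in>{1..M}. card {u\<in>U. e \<le> h u})" using assms(1) by (simp add: card_filter_sum)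
  finally show ?thesis .
qed

lemma layer:
  fixes f g :: "'a \<Rightarrow> enat"
  assumes fin: "finite U" "finite V" and ff: "\<forall>u\<in>U. f u \<noteq> \<infinity>" and gf: "\<forall>v\<in>V. g v \<noteq> \<infinity>"
    and c: "\<And>e::nat. card {v\<in>V. enat e \<le> g v} \<le> card {u\<in>U. enat e \<le> f u}"
  shows "sum g V \<le> sum f U"
proof -
  define f' where "f' = (\<lambda>u. the_enat (f u))"
  define g' where "g' = (\<lambda>u. the_enat (g u))"
  have fe: "f u = enat (f' u)" if "u \<in> U" for u using ff that unfolding f'_def by auto
  have ge: "g u = enat (g' u)" if "u \<in> V" for u using gf that unfolding g'_def by auto
  have sf: "sum f U = enat (sum f' U)" using fe sum_enat_fin[OF fin(1), of f'] by (metis sum.cong)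
  have sg: "sum g V = enat (sum g' V)" using ge sum_enat_fin[OF fin(2), of g'] by (metis sum.cong)
  define M where "M = sum f' U + sum g' V"
  have bf: "\<forall>u\<in>U. f' u \<le> M" unfolding M_def using fin(1) by (simp add: member_le_sum trans_le_add1)
  have bg: "\<forall>u\<in>V. g' u \<le> M" unfolding M_def using fin(2) by (simp add: member_le_sum trans_le_add2)
  have "sum g' V = (\<Sum>e\<in>{1..M}. card {u\<in>V. e \<le> g' u})" by (rule layer_nat[OF fin(2) bg])
  also have "\<dots> \<le> (\<Sum>e\<in>{1..M}. card {u\<in>U. e \<le> f' u})"
  proof (rule sum_mono)
    fix e
    have "{u\<in>V. e \<le> g' u} = {v\<in>V. enat e \<le> g v}" using ge by auto
    moreover have "{u\<in>U. e \<le> f' u} = {v\<in>U. enat e \<le> f v}" using fe by auto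
    ultimately show "card {u\<in>V. e \<le> g' u} \<le> card {u\<in>U. e \<le> f' u}" using c by simp
  qed
  also have "\<dots> = sum f' U" by (rule layer_nat[OF fin(1) bf, symmetric])
  finally show ?thesis using sf sg by simp
qed

lemma sum_enat_notinf:
  fixes f :: "'a \<Rightarrow> enat"
  assumes "finite A" "\<forall>i\<in>A. f i \<noteq> \<infinity>"
  shows "sum f A \<noteq> \<infinity>"
proof -
  have "sum f A = (\<Sum>i\<in>A. enat (the_enat (f i)))" using assms(2) by (intro sum.cong) auto
  then show ?thesis using sum_enat_fin[OF assms(1)] by simp
qed

definition Tset :: "int \<Rightarrow> int set \<Rightarrow> enat" where
  "Tset b X = (\<Sum>x\<in>X. \<Sum>z\<in>{z\<in>X. z < x}. ordb b (x - z))"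

lemma Tset_insert:
  assumes "finite X" "x \<notin> X"
  shows "Tset b (insert x X) = Tset b X + (\<Sum>z\<in>X. ordb b (x - z))"
proof -
  have inner: "(\<Sum>z\<in>{z\<in>insert x X. z < u}. ordb b (u - z)) =
      (\<Sum>z\<in>{z\<in>X. z < u}. ordb b (u - z)) + (if x < u then ordb b (x - u) else 0)" if "u \<in> X" for u
  proof (cases "x < u")
    case True
    then have "{z\<in>insert x X. z < u} = insert x {z\<in>X. z < u}" by auto
    then show ?thesis using True assms by (simp add: add.commute ordb_neg[of b "u - x", symmetric])
  next
    case False
    then have "{z\<in>insert x X. z < u} = {z\<in>X. z < u}" by auto
    then show ?thesis using False by simp
  qed
  have "Tset b (insert x X) = (\<Sum>z\<in>{z\<in>insert x X. z < x}. ordb b (x - z)) +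
      (\<Sum>u\<in>X. \<Sum>z\<in>{z\<in>insert x X. z < u}. ordb b (u - z))"
    unfolding Tset_def using assms by (simp add: sum.insert)
  also have "{z\<in>insert x X. z < x} = {z\<in>X. z < x}" by auto
  also have "(\<Sum>u\<in>X. \<Sum>z\<in>{z\<in>insert x X. z < u}. ordb b (u - z)) =
     Tset b X + (\<Sum>u\<in>X. if x < u then ordb b (x - u) else 0)"
    unfolding Tset_def using inner by (simp add: sum.distrib)
  also have "(\<Sum>z\<in>{z\<in>X. z < x}. ordb b (x - z)) = (\<Sum>u\<in>X. if u < x then ordb b (x - u) else 0)"
    using assms(1) by (simp add: sum.inter_filter)
  finally have "Tset b (insert x X) = Tset b X + ((\<Sum>u\<in>X. if u < x then ordb b (x - u) else 0) +
      (\<Sum>u\<in>X. if x < u then ordb b (x - u) else 0))" by (simp add: ac_simps)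
  also have "(\<Sum>u\<in>X. if u < x then ordb b (x - u) else 0) + (\<Sum>u\<in>X. if x < u then ordb b (x - u) else 0)
      = (\<Sum>u\<in>X. ordb b (x - u))"
    unfolding sum.distrib[symmetric] using assms(2) by (intro sum.cong) auto
  finally show ?thesis .
qed

lemma bsum_set:
  assumes "inj_on a {..<k}"
  shows "bsum b a k x = (\<Sum>z\<in>a ` {..<k}. ordb b (x - z))"
  unfolding bsum_def using sum.reindex[OF assms, of "\<lambda>z. ordb b (x - z)"] by simp

lemma Sq_Tset:
  "inj_on s {..m} \<Longrightarrow> (\<Sum>k\<le>m. alpha_seq b s k) = Tset b (s ` {..m})"
proof (induction m)
  case 0
  then show ?case by (simp add: alpha_seq_def bsum_def Tset_def)
next
  case (Suc m)
  have inj: "inj_on s {..m}" using Suc.prems by (rule inj_on_subset) auto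
  have nin: "s (Suc m) \<notin> s ` {..m}" using Suc.prems by (auto simp: inj_on_def) (metis atMost_iff le_Suc_eq Suc_n_not_le_n)
  have img: "s ` {..Suc m} = insert (s (Suc m)) (s ` {..m})" by (simp add: atMost_Suc)
  have "alpha_seq b s (Suc m) = (\<Sum>z\<in>s ` {..m}. ordb b (s (Suc m) - z))"
    unfolding alpha_seq_def using bsum_set[of s "Suc m" b "s (Suc m)"] inj
    by (simp add: lessThan_Suc_atMost)
  then show ?case using Suc.IH[OF inj] img nin Tset_insert[of "s ` {..m}" "s (Suc m)" b]
    by simp
qed

lemma greedy_opt:
  fixes b :: int
  assumes b: "b \<ge> 2" and bo: "b_ordering S b a"
  shows "inj_on a {..<k} \<Longrightarrow> X \<subseteq> S \<Longrightarrow> finite X \<Longrightarrow> card X = k \<Longrightarrow> Tset b (a ` {..<k}) \<le> Tset b X"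
proof (induction k arbitrary: X)
  case 0
  then show ?case by (simp add: Tset_def)
next
  case (Suc k)
  define Y where "Y = a ` {..<k}"
  have injk: "inj_on a {..<k}" using Suc.prems(1) by (rule inj_on_subset) auto
  have cY: "card Y = k" unfolding Y_def using injk by (simp add: card_image)
  have fY: "finite Y" unfolding Y_def by simp
  obtain y where y: "y \<in> X" "y \<notin> Y" and cnt: "\<forall>e. card {z\<in>Y. b^e dvd (y - z)} < card {x\<in>X. b^e dvd (y - x)}"
    using exch[OF b Suc.prems(3) fY] cY Suc.prems(4) by auto
  define X' where "X' = X - {y}"
  have fX': "finite X'" using Suc.prems(3) unfolding X'_def by simp
  have yX': "y \<notin> X'" unfolding X'_def by simp
  have XX: "X = insert y X'" unfolding X'_def using y(1) by auto
  have cX': "card X' = k" unfolding X'_def using Suc.prems(3,4) y(1) by simp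
  have IH: "Tset b Y \<le> Tset b X'" unfolding Y_def
    by (rule Suc.IH[OF injk]) (use Suc.prems X'_def fX' cX' in auto)
  have wcmp: "(\<Sum>z\<in>Y. ordb b (y - z)) \<le> (\<Sum>z\<in>X'. ordb b (y - z))"
  proof (rule layer[OF fX' fY])
    show "\<forall>u\<in>X'. ordb b (y - u) \<noteq> \<infinity>" using yX' by (auto simp: ordb_inf)
    show "\<forall>u\<in>Y. ordb b (y - u) \<noteq> \<infinity>" using y(2) by (auto simp: ordb_inf)
    fix e :: nat
    have e1: "{v\<in>Y. enat e \<le> ordb b (y - v)} = {z\<in>Y. b^e dvd (y - z)}" using ordb_ge[OF b] by auto
    have e2: "{v\<in>X'. enat e \<le> ordb b (y - v)} = {z\<in>X. b^e dvd (y - z)} - {y}"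
      unfolding X'_def using ordb_ge[OF b] by auto
    have "y \<in> {z\<in>X. b^e dvd (y - z)}" using y(1) by simp
    then have "card ({z\<in>X. b^e dvd (y - z)} - {y}) = card {z\<in>X. b^e dvd (y - z)} - 1"
      by (simp add: card_Diff_singleton)
    then show "card {v\<in>Y. enat e \<le> ordb b (y - v)} \<le> card {v\<in>X'. enat e \<le> ordb b (y - v)}"
      unfolding e1 e2 using cnt[rule_format, of e] by linarith
  qed
  have greedy: "(\<Sum>z\<in>Y. ordb b (a k - z)) \<le> (\<Sum>z\<in>Y. ordb b (y - z))"
  proof (cases "k = 0")
    case True then show ?thesis unfolding Y_def by simp
  next
    case False
    have "y \<in> S" using y(1) Suc.prems(2) by auto
    then have "bsum b a k (a k) \<le> bsum b a k y" using bo False unfolding b_ordering_def by auto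
    then show ?thesis using bsum_set[OF injk] unfolding Y_def by simp
  qed
  have akY: "a k \<notin> Y" unfolding Y_def using Suc.prems(1) by (auto simp: inj_on_def) (metis lessThan_iff less_Suc_eq less_irrefl)
  have "a ` {..<Suc k} = insert (a k) Y" unfolding Y_def by (simp add: lessThan_Suc)
  then have "Tset b (a ` {..<Suc k}) = Tset b Y + (\<Sum>z\<in>Y. ordb b (a k - z))"
    using Tset_insert[OF fY akY] by simp
  also have "\<dots> \<le> Tset b X' + (\<Sum>z\<in>X'. ordb b (y - z))"
    using IH greedy wcmp by (meson add_mono order.trans)
  also have "\<dots> = Tset b X" using Tset_insert[OF fX' yX'] XX by simp
  finally show ?case .
qed

lemma sum_1_to_0:
  "(\<Sum>k=1..m. alpha_seq b s k) = (\<Sum>k\<le>m. alpha_seq b s k)"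
proof -
  have "(\<Sum>k\<le>m. alpha_seq b s k) = (\<Sum>k=0..m. alpha_seq b s k)" by (simp add: atMost_atLeast0)
  also have "\<dots> = alpha_seq b s 0 + (\<Sum>k=Suc 0..m. alpha_seq b s k)" by (rule sum.atLeast_Suc_atMost) simp
  finally show ?thesis by (simp add: alpha_seq_def bsum_def)
qed

lemma main_ineq:
  fixes b :: int
  assumes b: "b \<ge> 2" and bo: "b_ordering S b a" and sS: "\<forall>i\<le>m. s i \<in> S"
  shows "(\<Sum>k=1..m. alpha_seq b a k) \<le> (\<Sum>k=1..m. alpha_seq b s k)"
proof (cases "inj_on s {..m}")
  case False
  then obtain j k where jk: "j < k" "k \<le> m" "s j = s k"
    unfolding inj_on_def by (metis atMost_iff linorder_neqE_nat)
  have "alpha_seq b s k = \<infinity>" unfolding alpha_seq_def bsum_def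
    by (rule sum_enat_inf[of _ j]) (use jk in \<open>auto simp: ordb_inf\<close>)
  then have "(\<Sum>k\<le>m. alpha_seq b s k) = \<infinity>"
    by (intro sum_enat_inf[of _ k]) (use jk in auto)
  then show ?thesis unfolding sum_1_to_0 by simp
next
  case True
  define X where "X = s ` {..m}"
  have cX: "card X = Suc m" unfolding X_def using True by (simp add: card_image)
  have XS: "X \<subseteq> S" unfolding X_def using sS by auto
  have injA: "inj_on a {..m}"
  proof (rule ccontr)
    assume "\<not> inj_on a {..m}"
    then obtain j k where jk: "j < k" "k \<le> m" "a j = a k"
      unfolding inj_on_def by (metis atMost_iff linorder_neqE_nat)
    have inf: "bsum b a k (a k) = \<infinity>" unfolding bsum_def
      by (rule sum_enat_inf[of _ j]) (use jk in \<open>auto simp: ordb_inf\<close>)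
    have "S \<subseteq> a ` {..<k}"
    proof
      fix x assume "x \<in> S"
      then have "bsum b a k (a k) \<le> bsum b a k x" using bo jk unfolding b_ordering_def by auto
      then have "bsum b a k x = \<infinity>" using inf by simp
      then have "\<exists>i<k. ordb b (x - a i) = \<infinity>" unfolding bsum_def
        using sum_enat_notinf[of "{..<k}" "\<lambda>i. ordb b (x - a i)"] by (metis finite_lessThan lessThan_iff)
      then show "x \<in> a ` {..<k}" by (auto simp: ordb_inf)
    qed
    then have "X \<subseteq> a ` {..<k}" using XS by auto
    then have "card X \<le> card (a ` {..<k})" by (intro card_mono) auto
    also have "\<dots> \<le> k" using card_image_le[of "{..<k}" a] by simp
    finally show False using cX jk by simp
  qed
  have "Tset b (a ` {..<Suc m}) \<le> Tset b X"
    by (rule greedy_opt[OF b bo]) (use injA XS cX X_def lessThan_Suc_atMost in auto)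
  then show ?thesis unfolding sum_1_to_0 using Sq_Tset[OF injA] Sq_Tset[OF True] X_def
    by (simp add: lessThan_Suc_atMost)
qed

definition wl :: "int \<Rightarrow> int list \<Rightarrow> int \<Rightarrow> enat" where
  "wl b xs x = (\<Sum>j<length xs. ordb b (x - xs ! j))"

definition pick :: "int set \<Rightarrow> int \<Rightarrow> int list \<Rightarrow> int" where
  "pick S b xs = (SOME x. x \<in> S \<and> (\<forall>y\<in>S. wl b xs x \<le> wl b xs y))"

primrec pref :: "int set \<Rightarrow> int \<Rightarrow> nat \<Rightarrow> int list" where
  "pref S b 0 = []"
| "pref S b (Suc n) = pref S b n @ [pick S b (pref S b n)]"

lemma pick_ok:
  assumes "S \<noteq> {}"
  shows "pick S b xs \<in> S \<and> (\<forall>y\<in>S. wl b xs (pick S b xs) \<le> wl b xs y)"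
proof -
  let ?P = "\<lambda>v. \<exists>x\<in>S. v = wl b xs x"
  have ex: "\<exists>v. ?P v" using assms by auto
  define v where "v = (LEAST v. ?P v)"
  have "?P v" unfolding v_def by (rule LeastI_ex[OF ex])
  then obtain x where x: "x \<in> S" "v = wl b xs x" by auto
  have "\<forall>y\<in>S. v \<le> wl b xs y" unfolding v_def by (auto intro: Least_le)
  then have "\<exists>x. x \<in> S \<and> (\<forall>y\<in>S. wl b xs x \<le> wl b xs y)" using x by auto
  then show ?thesis unfolding pick_def by (rule someI_ex)
qed

lemma pref_len: "length (pref S b n) = n"
  by (induction n) auto

lemma pref_nth: "j < n \<Longrightarrow> pref S b n ! j = pref S b (Suc j) ! j"
proof (induction n)
  case 0 then show ?case by simp
next
  case (Suc n)
  show ?case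
  proof (cases "j < n")
    case True
    then show ?thesis using Suc by (simp add: nth_append pref_len)
  next
    case False
    then have "j = n" using Suc.prems by simp
    then show ?thesis by simp
  qed
qed

lemma exists_bord:
  assumes "S \<noteq> {}"
  shows "\<exists>a. b_ordering S b a"
proof -
  define a where "a = (\<lambda>i. pref S b (Suc i) ! i)"
  have ai: "a i = pick S b (pref S b i)" for i unfolding a_def by (simp add: nth_append pref_len)
  have bs: "bsum b a i x = wl b (pref S b i) x" for i x
    unfolding bsum_def wl_def pref_len a_def using pref_nth[of _ i S b] by (intro sum.cong) auto
  have "b_ordering S b a" unfolding b_ordering_def
    using pick_ok[OF assms] by (simp add: ai bs)
  then show ?thesis by blast
qed

theorem theorem3p5:
  fixes b :: int
  assumes "b \<ge> 2"
  shows
   "(\<forall>(S::int set) (n::enat) (s::nat \<Rightarrow> int) (m::nat).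
       n \<le> ecard S \<longrightarrow> (\<forall>i. enat i \<le> n \<longrightarrow> s i \<in> S) \<longrightarrow>
       1 \<le> m \<longrightarrow> enat m < n \<longrightarrow>
       (\<Sum>k=1..m. alpha_seq b s k) \<ge> (\<Sum>k=1..m. alpha_set S b k))
    \<and>
    (\<forall>(S::int set) (N::nat) (s::nat \<Rightarrow> int).
       1 \<le> N \<longrightarrow> (\<forall>i\<le>N. s i \<in> S) \<longrightarrow>
       (\<exists>a. b_ordering S b a \<and> (\<forall>i\<le>N. s i = a i)) \<longrightarrow>
       (\<forall>m. 1 \<le> m \<and> m \<le> N \<longrightarrow>
          (\<Sum>k=1..m. alpha_seq b s k) = (\<Sum>k=1..m. alpha_set S b k)))"
proof (intro conjI allI impI)
  fix S :: "int set" and n :: enat and s :: "nat \<Rightarrow> int" and m :: nat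
  assume h: "\<forall>i. enat i \<le> n \<longrightarrow> s i \<in> S" "enat m < n"
  have sS: "\<forall>i\<le>m. s i \<in> S" using h by (meson enat_ord_simps(1) le_less_trans less_imp_le)
  then have "S \<noteq> {}" by auto
  then have bo: "b_ordering S b (SOME a. b_ordering S b a)" using exists_bord by (metis someI_ex)
  show "(\<Sum>k=1..m. alpha_seq b s k) \<ge> (\<Sum>k=1..m. alpha_set S b k)"
    unfolding alpha_set_def using main_ineq[OF assms bo sS] .
next
  fix S :: "int set" and N :: nat and s :: "nat \<Rightarrow> int" and m :: nat
  assume h: "\<forall>i\<le>N. s i \<in> S" "\<exists>a. b_ordering S b a \<and> (\<forall>i\<le>N. s i = a i)" "1 \<le> m \<and> m \<le> N"
  obtain a where a: "b_ordering S b a" "\<forall>i\<le>N. s i = a i" using h(2) by blast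
  have bo: "b_ordering S b (SOME a. b_ordering S b a)" using a(1) by (metis someI_ex)
  have eq: "alpha_seq b s k = alpha_seq b a k" if "k \<le> m" for k
    unfolding alpha_seq_def bsum_def using a(2) h(3) that by (intro sum.cong) auto
  have eqs: "(\<Sum>k=1..m. alpha_seq b s k) = (\<Sum>k=1..m. alpha_seq b a k)"
    using eq by (intro sum.cong) auto
  have aS: "\<forall>i\<le>m. a i \<in> S" using a(1) unfolding b_ordering_def by auto
  have bS: "\<forall>i\<le>m. (SOME a. b_ordering S b a) i \<in> S" using bo unfolding b_ordering_def by auto
  show "(\<Sum>k=1..m. alpha_seq b s k) = (\<Sum>k=1..m. alpha_set S b k)"
    unfolding eqs alpha_set_def
    using main_ineq[OF assms bo aS] main_ineq[OF assms a(1) bS] by (rule antisym[rotated])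
qed

end
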